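(* Let $n\ge 1$ be an integer. Knowlton-Graham partitions of $\{1,\ldots,n\}$ exist if and only if there exist a positive integer $m$ and an $m\times m$ matrix with entries in $\{0,1\}$ whose row sums $(r_1,\ldots,r_m)$ and column sums $(c_1,\ldots,c_m)$ satisfy: $j$ divides $r_j$ and $j$ divides $c_j$ for every $1\le j\le m$, and $r_1+\cdots+r_m=c_1+\cdots+c_m=n$.
   Context: A pair of Knowlton-Graham partitions of $\{1,\ldots,n\}$ consists of two partitions $A_1,\ldots,A_p$ and $B_1,\ldots,B_q$ of $\{1,\ldots,n\}$ into nonempty pairwise disjoint sets such that, for every pair of positive integers $(j,k)$, at most one element of $\{1,\ldots,n\}$ lies both in some $A_i$ with $|A_i|=j$ and in some $B_l$ with $|B_l|=k$. *)

theory Defs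
  imports Main "HOL-Library.Disjoint_Sets"
begin

definition KG_pair :: "nat \<Rightarrow> nat set set \<Rightarrow> nat set set \<Rightarrow> bool" where
  "KG_pair n A B \<longleftrightarrow> partition_on {1..n} A \<and> partition_on {1..n} B \<and>
     (\<forall>j k. 0 < j \<longrightarrow> 0 < k \<longrightarrow>
        card {x \<in> {1..n}. (\<exists>a\<in>A. x \<in> a \<and> card a = j) \<and> (\<exists>b\<in>B. x \<in> b \<and> card b = k)} \<le> 1)"

definition KG_exists :: "nat \<Rightarrow> bool" where
  "KG_exists n \<longleftrightarrow> (\<exists>A B. KG_pair n A B)"

end

theory Submission
  imports Defs
begin

definition YY :: "nat \<Rightarrow> nat set set \<Rightarrow> nat \<Rightarrow> nat set" where
  "YY n A j = {x \<in> {1..n}. \<exists>a\<in>A. x \<in> a \<and> card a = j}"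

lemma YYsub: "YY n A j \<subseteq> {1..n}" unfolding YY_def by blast

lemma block_card:
  assumes "partition_on {1..n} B" "b \<in> B"
  shows "1 \<le> card b \<and> card b \<le> n"
proof -
  have sub: "b \<subseteq> {1..n}" using assms partition_onD1 by blast
  have "b \<noteq> {}" using assms partition_onD3 by blast
  moreover have "finite b" using sub finite_subset by blast
  ultimately have "card b \<ge> 1" by (simp add: Suc_le_eq card_gt_0_iff)
  moreover have "card b \<le> n" using card_mono[OF _ sub] by simp
  ultimately show ?thesis by simp
qed

lemma sum_inter:
  assumes P: "partition_on {1..n} B" and X: "X \<subseteq> {1..n}"
  shows "(\<Sum>k=1..n. card (X \<inter> YY n B k)) = card X"
proof -
  have "card (\<Union>k\<in>{1..n}. X \<inter> YY n B k) = (\<Sum>k=1..n. card (X \<inter> YY n B k))"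
  proof (rule card_UN_disjoint)
    show "\<forall>i\<in>{1..n}. finite (X \<inter> YY n B i)" unfolding YY_def by auto
    show "\<forall>i::nat\<in>{1..n}. \<forall>j\<in>{1..n}. i \<noteq> j \<longrightarrow> X \<inter> YY n B i \<inter> (X \<inter> YY n B j) = {}"
    proof (intro ballI impI)
      fix i j :: nat assume "i \<noteq> j"
      have d: "disjoint B" using P partition_onD2 by blast
      show "X \<inter> YY n B i \<inter> (X \<inter> YY n B j) = {}"
      proof (rule ccontr)
        assume "X \<inter> YY n B i \<inter> (X \<inter> YY n B j) \<noteq> {}"
        then obtain x where x1: "x \<in> YY n B i" and x2: "x \<in> YY n B j" by blast
        from x1 obtain b where "b \<in> B" "x \<in> b" "card b = i" unfolding YY_def by blast
        moreover from x2 obtain b' where "b' \<in> B" "x \<in> b'" "card b' = j" unfolding YY_def by blast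
        ultimately have "b \<in> B" "b' \<in> B" "b \<noteq> b'" "x \<in> b \<inter> b'" using \<open>i \<noteq> j\<close> by auto
        then show False using d unfolding disjoint_def by auto
      qed
    qed
  qed simp
  moreover have "(\<Union>k\<in>{1..n}. X \<inter> YY n B k) = X"
  proof
    show "X \<subseteq> (\<Union>k\<in>{1..n}. X \<inter> YY n B k)"
    proof
      fix x assume "x \<in> X"
      then have "x \<in> {1..n}" using X by blast
      then obtain b where "b \<in> B" "x \<in> b" using partition_onD1[OF P] by blast
      then have "card b \<in> {1..n}" using block_card[OF P] by auto
      then show "x \<in> (\<Union>k\<in>{1..n}. X \<inter> YY n B k)"
        using \<open>x \<in> X\<close> \<open>x \<in> {1..n}\<close> \<open>b \<in> B\<close> \<open>x \<in> b\<close> unfolding YY_def by blast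
    qed
  qed blast
  ultimately show ?thesis by simp
qed

lemma row_dvd:
  assumes P: "partition_on {1..n} A"
  shows "j dvd card (YY n A j)"
proof -
  let ?C = "{a\<in>A. card a = j}"
  have eq: "YY n A j = \<Union>?C" using partition_onD1[OF P] unfolding YY_def by blast
  have fA: "finite A" using P finite_elements by blast
  have "card (\<Union>?C) = sum card ?C"
  proof (rule card_Union_disjoint)
    show "pairwise disjnt ?C" using partition_onD2[OF P] by (simp add: pairwise_def)
    fix a assume "a \<in> ?C"
    then have "a \<subseteq> {1..n}" using partition_onD1[OF P] by blast
    then show "finite a" using finite_subset by blast
  qed
  also have "\<dots> = card ?C * j" by simp
  finally show ?thesis using eq by simp
qed

lemma forward:
  assumes "n \<ge> 1" "KG_pair n A B"
  shows "\<exists>m::nat. m > 0 \<and> (\<exists>M :: nat \<Rightarrow> nat \<Rightarrow> nat.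
       (\<forall>i\<in>{1..m}. \<forall>l\<in>{1..m}. M i l \<in> {0, 1}) \<and>
       (\<forall>j\<in>{1..m}. j dvd (\<Sum>l=1..m. M j l) \<and> j dvd (\<Sum>i=1..m. M i j)) \<and>
       (\<Sum>j=1..m. \<Sum>l=1..m. M j l) = n \<and>
       (\<Sum>j=1..m. \<Sum>i=1..m. M i j) = n)"
proof -
  have PA: "partition_on {1..n} A" and PB: "partition_on {1..n} B" using assms(2) unfolding KG_pair_def by auto
  define M where "M j k = card (YY n A j \<inter> YY n B k)" for j k
  have M01: "M i l \<in> {0,1}" if "i \<in> {1..n}" "l \<in> {1..n}" for i l
  proof -
    have "YY n A i \<inter> YY n B l = {x \<in> {1..n}. (\<exists>a\<in>A. x \<in> a \<and> card a = i) \<and> (\<exists>b\<in>B. x \<in> b \<and> card b = l)}"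
      unfolding YY_def by blast
    moreover have "card {x \<in> {1..n}. (\<exists>a\<in>A. x \<in> a \<and> card a = i) \<and> (\<exists>b\<in>B. x \<in> b \<and> card b = l)} \<le> 1"
      using assms(2) that unfolding KG_pair_def by auto
    ultimately have "M i l \<le> 1" unfolding M_def by simp
    then show ?thesis by auto
  qed
  have row: "(\<Sum>l=1..n. M j l) = card (YY n A j)" for j
    unfolding M_def by (rule sum_inter[OF PB YYsub])
  have col: "(\<Sum>i=1..n. M i j) = card (YY n B j)" for j
  proof -
    have "(\<Sum>i=1..n. M i j) = (\<Sum>i=1..n. card (YY n B j \<inter> YY n A i))"
      unfolding M_def by (simp add: Int_commute)
    also have "\<dots> = card (YY n B j)" by (rule sum_inter[OF PA YYsub])
    finally show ?thesis .
  qed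
  have totA: "(\<Sum>j=1..n. card (YY n A j)) = n"
    using sum_inter[OF PA, of "{1..n}"] YYsub by (simp add: Int_absorb1)
  have totB: "(\<Sum>j=1..n. card (YY n B j)) = n"
    using sum_inter[OF PB, of "{1..n}"] YYsub by (simp add: Int_absorb1)
  have c1: "\<forall>i\<in>{1..n}. \<forall>l\<in>{1..n}. M i l \<in> {0, 1}" using M01 by blast
  have c2: "\<forall>j\<in>{1..n}. j dvd (\<Sum>l=1..n. M j l) \<and> j dvd (\<Sum>i=1..n. M i j)"
    unfolding row col using row_dvd[OF PA] row_dvd[OF PB] by blast
  have c3: "(\<Sum>j=1..n. \<Sum>l=1..n. M j l) = n" unfolding row by (rule totA)
  have c4: "(\<Sum>j=1..n. \<Sum>i=1..n. M i j) = n" unfolding col by (rule totB)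
  have "n > 0" using assms(1) by simp
  show ?thesis
  proof (rule exI[of _ n], rule conjI)
    show "n > 0" by fact
    show "\<exists>M :: nat \<Rightarrow> nat \<Rightarrow> nat.
       (\<forall>i\<in>{1..n}. \<forall>l\<in>{1..n}. M i l \<in> {0, 1}) \<and>
       (\<forall>j\<in>{1..n}. j dvd (\<Sum>l=1..n. M j l) \<and> j dvd (\<Sum>i=1..n. M i j)) \<and>
       (\<Sum>j=1..n. \<Sum>l=1..n. M j l) = n \<and>
       (\<Sum>j=1..n. \<Sum>i=1..n. M i j) = n"
      by (rule exI[of _ M], intro conjI, fact c1, fact c2, fact c3, fact c4)
  qed
qed

lemma split_blocks:
  fixes X :: "'a set"
  assumes "finite X" "0 < j" "card X = j * a"
  shows "\<exists>P. partition_on X P \<and> (\<forall>b\<in>P. card b = j)"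
  using assms
proof (induction a arbitrary: X)
  case 0
  then have "X = {}" by simp
  then show ?case by (intro exI[of _ "{}"]) (simp add: partition_on_empty)
next
  case (Suc a)
  have "j \<le> card X" using Suc.prems by simp
  then obtain Y where Y: "Y \<subseteq> X" "card Y = j" "finite Y" by (rule obtain_subset_with_card_n)
  have "card (X - Y) = j * a" using Suc.prems Y by (simp add: card_Diff_subset)
  moreover have "finite (X - Y)" using Suc.prems by simp
  ultimately obtain P where P: "partition_on (X - Y) P" "\<forall>b\<in>P. card b = j"
    using Suc.IH Suc.prems by blast
  have Yne: "Y \<noteq> {}" using Y Suc.prems by auto
  have "partition_on X (insert Y P)"
  proof (rule partition_onI)
    show "\<Union>(insert Y P) = X" using partition_onD1[OF P(1)] Y by auto
    show "{} \<notin> insert Y P" using partition_onD3[OF P(1)] Yne by auto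
    fix p q assume "p \<in> insert Y P" "q \<in> insert Y P" "p \<noteq> q"
    moreover have "\<And>p. p \<in> P \<Longrightarrow> p \<subseteq> X - Y" using partition_onD1[OF P(1)] by blast
    moreover have "\<And>p q. p \<in> P \<Longrightarrow> q \<in> P \<Longrightarrow> p \<noteq> q \<Longrightarrow> disjnt p q"
      using partition_onD2[OF P(1)] by (simp add: pairwise_def)
    ultimately show "disjnt p q"
    proof (cases "p \<in> P \<and> q \<in> P")
      case True
      then show ?thesis using \<open>\<And>p q. p \<in> P \<Longrightarrow> q \<in> P \<Longrightarrow> p \<noteq> q \<Longrightarrow> disjnt p q\<close> \<open>p \<noteq> q\<close> by blast
    next
      case False
      then have "(p = Y \<and> q \<in> P) \<or> (q = Y \<and> p \<in> P)"
        using \<open>p \<in> insert Y P\<close> \<open>q \<in> insert Y P\<close> \<open>p \<noteq> q\<close> by blast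
      then show ?thesis using \<open>\<And>p. p \<in> P \<Longrightarrow> p \<subseteq> X - Y\<close> by (auto simp: disjnt_def)
    qed
  qed
  then show ?case using P(2) Y by (intro exI[of _ "insert Y P"]) auto
qed

lemma combine_partitions:
  assumes "\<forall>j\<in>I. partition_on (R j) (P j)"
    and "\<forall>i\<in>I. \<forall>j\<in>I. i \<noteq> j \<longrightarrow> R i \<inter> R j = {}"
  shows "partition_on (\<Union>j\<in>I. R j) (\<Union>j\<in>I. P j)"
proof (rule partition_onI)
  have "\<And>j. j \<in> I \<Longrightarrow> \<Union>(P j) = R j" using assms(1) partition_onD1 by metis
  then show "\<Union>(\<Union>j\<in>I. P j) = (\<Union>j\<in>I. R j)" by blast
  show "{} \<notin> (\<Union>j\<in>I. P j)" using assms(1) partition_onD3 by blast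
  fix p q assume p: "p \<in> (\<Union>j\<in>I. P j)" and q: "q \<in> (\<Union>j\<in>I. P j)" and "p \<noteq> q"
  then obtain i j where ij: "i \<in> I" "j \<in> I" "p \<in> P i" "q \<in> P j" by blast
  show "disjnt p q"
  proof (cases "i = j")
    case True
    then show ?thesis using assms(1) ij \<open>p \<noteq> q\<close> partition_onD2 by (metis pairwise_def)
  next
    case False
    have "p \<subseteq> R i" "q \<subseteq> R j" using assms(1) ij partition_onD1 by blast+
    moreover have "R i \<inter> R j = {}" using assms(2) ij False by blast
    ultimately show ?thesis by (auto simp: disjnt_def)
  qed
qed

lemma sum01:
  assumes "finite L" "\<forall>l\<in>L. g l \<in> {0, 1::nat}"
  shows "sum g L = card {l\<in>L. g l = 1}"
proof -
  have "card {l\<in>L. g l = 1} = sum (\<lambda>_. 1::nat) {l\<in>L. g l = 1}" by simp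
  also have "\<dots> = (\<Sum>l\<in>L. if g l = 1 then 1 else 0)" using assms(1) by (rule sum.inter_filter)
  also have "\<dots> = sum g L" using assms(2) by (intro sum.cong) auto
  finally show ?thesis by simp
qed

lemma backward:
  assumes m: "m > 0"
    and h1: "\<forall>i\<in>{1..m}. \<forall>l\<in>{1..m}. M i l \<in> {0, 1::nat}"
    and h2: "\<forall>j\<in>{1..m}. j dvd (\<Sum>l=1..m. M j l) \<and> j dvd (\<Sum>i=1..m. M i j)"
    and h3: "(\<Sum>j=1..m. \<Sum>l=1..m. M j l) = n"
  shows "KG_exists n"
proof -
  define S where "S = (SIGMA j:{1..m}. {l\<in>{1..m}. M j l = 1})"
  have rowc: "(\<Sum>l=1..m. M j l) = card {l\<in>{1..m}. M j l = 1}" if "j \<in> {1..m}" for j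
    using h1 that by (intro sum01) auto
  have colc: "(\<Sum>i=1..m. M i k) = card {i\<in>{1..m}. M i k = 1}" if "k \<in> {1..m}" for k
    using h1 that by (intro sum01) auto
  have "card S = (\<Sum>j=1..m. card {l\<in>{1..m}. M j l = 1})" unfolding S_def by simp
  also have "\<dots> = n" using h3 rowc by simp
  finally have cS: "card S = n" .
  have fS: "finite S" unfolding S_def by simp
  obtain f where bij: "bij_betw f {1..n} S"
    using finite_same_card_bij[of "{1..n}" S] fS cS by auto
  have inj: "inj_on f {1..n}" using bij by (rule bij_betw_imp_inj_on)
  have imf: "f ` {1..n} = S" using bij by (rule bij_betw_imp_surj_on)
  define R where "R j = {x\<in>{1..n}. fst (f x) = j}" for j
  define C where "C k = {x\<in>{1..n}. snd (f x) = k}" for k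
  have cR: "card (R j) = card {l\<in>{1..m}. M j l = 1}" if "j \<in> {1..m}" for j
  proof -
    have "f ` R j = Pair j ` {l\<in>{1..m}. M j l = 1}"
    proof
      show "f ` R j \<subseteq> Pair j ` {l\<in>{1..m}. M j l = 1}"
      proof
        fix p assume "p \<in> f ` R j"
        then obtain x where "x \<in> {1..n}" "fst (f x) = j" "p = f x" unfolding R_def by blast
        moreover then have "f x \<in> S" using imf by blast
        ultimately show "p \<in> Pair j ` {l\<in>{1..m}. M j l = 1}" unfolding S_def by force
      qed
      show "Pair j ` {l\<in>{1..m}. M j l = 1} \<subseteq> f ` R j"
      proof
        fix p assume "p \<in> Pair j ` {l\<in>{1..m}. M j l = 1}"
        then have "p \<in> S" "fst p = j" unfolding S_def using that by auto
        then obtain x where "x \<in> {1..n}" "p = f x" using imf by force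
        then show "p \<in> f ` R j" unfolding R_def using \<open>fst p = j\<close> by blast
      qed
    qed
    moreover have "inj_on f (R j)" using inj unfolding R_def by (rule inj_on_subset) blast
    ultimately have "card (R j) = card (Pair j ` {l\<in>{1..m}. M j l = 1})" using card_image by metis
    also have "\<dots> = card {l\<in>{1..m}. M j l = 1}" by (rule card_image) (simp add: inj_on_def)
    finally show ?thesis .
  qed
  have cC: "card (C k) = card {i\<in>{1..m}. M i k = 1}" if "k \<in> {1..m}" for k
  proof -
    have "f ` C k = (\<lambda>i. (i, k)) ` {i\<in>{1..m}. M i k = 1}"
    proof
      show "f ` C k \<subseteq> (\<lambda>i. (i, k)) ` {i\<in>{1..m}. M i k = 1}"
      proof
        fix p assume "p \<in> f ` C k"
        then obtain x where "x \<in> {1..n}" "snd (f x) = k" "p = f x" unfolding C_def by blast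
        moreover then have "f x \<in> S" using imf by blast
        ultimately show "p \<in> (\<lambda>i. (i, k)) ` {i\<in>{1..m}. M i k = 1}" unfolding S_def by force
      qed
      show "(\<lambda>i. (i, k)) ` {i\<in>{1..m}. M i k = 1} \<subseteq> f ` C k"
      proof
        fix p assume "p \<in> (\<lambda>i. (i, k)) ` {i\<in>{1..m}. M i k = 1}"
        then have "p \<in> S" "snd p = k" unfolding S_def using that by auto
        then obtain x where "x \<in> {1..n}" "p = f x" using imf by force
        then show "p \<in> f ` C k" unfolding C_def using \<open>snd p = k\<close> by blast
      qed
    qed
    moreover have "inj_on f (C k)" using inj unfolding C_def by (rule inj_on_subset) blast
    ultimately have "card (C k) = card ((\<lambda>i. (i, k)) ` {i\<in>{1..m}. M i k = 1})" using card_image by metis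
    also have "\<dots> = card {i\<in>{1..m}. M i k = 1}" by (rule card_image) (simp add: inj_on_def)
    finally show ?thesis .
  qed
  have "\<forall>j\<in>{1..m}. \<exists>P. partition_on (R j) P \<and> (\<forall>b\<in>P. card b = j)"
  proof
    fix j assume j: "j \<in> {1..m}"
    then have "j dvd card (R j)" using h2 cR rowc by simp
    then obtain a where "card (R j) = j * a" by blast
    moreover have "finite (R j)" unfolding R_def by simp
    ultimately show "\<exists>P. partition_on (R j) P \<and> (\<forall>b\<in>P. card b = j)"
      using j by (intro split_blocks) auto
  qed
  then obtain PA where PA: "\<forall>j\<in>{1..m}. partition_on (R j) (PA j) \<and> (\<forall>b\<in>PA j. card b = j)"
    by (metis bchoice)
  have "\<forall>j\<in>{1..m}. \<exists>P. partition_on (C j) P \<and> (\<forall>b\<in>P. card b = j)"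
  proof
    fix j assume j: "j \<in> {1..m}"
    then have "j dvd card (C j)" using h2 cC colc by simp
    then obtain a where "card (C j) = j * a" by blast
    moreover have "finite (C j)" unfolding C_def by simp
    ultimately show "\<exists>P. partition_on (C j) P \<and> (\<forall>b\<in>P. card b = j)"
      using j by (intro split_blocks) auto
  qed
  then obtain PB where PB: "\<forall>j\<in>{1..m}. partition_on (C j) (PB j) \<and> (\<forall>b\<in>PB j. card b = j)"
    by (metis bchoice)
  have fst_in: "fst (f x) \<in> {1..m}" and snd_in: "snd (f x) \<in> {1..m}" if "x \<in> {1..n}" for x
  proof -
    have "f x \<in> S" using imf that by blast
    then show "fst (f x) \<in> {1..m}" "snd (f x) \<in> {1..m}" unfolding S_def by auto
  qed
  have UR: "(\<Union>j\<in>{1..m}. R j) = {1..n}" unfolding R_def using fst_in by auto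
  have UC: "(\<Union>j\<in>{1..m}. C j) = {1..n}" unfolding C_def using snd_in by auto
  define A where "A = (\<Union>j\<in>{1..m}. PA j)"
  define B where "B = (\<Union>j\<in>{1..m}. PB j)"
  have pA: "partition_on {1..n} A"
    unfolding A_def UR[symmetric] by (rule combine_partitions) (use PA in \<open>auto simp: R_def\<close>)
  have pB: "partition_on {1..n} B"
    unfolding B_def UC[symmetric] by (rule combine_partitions) (use PB in \<open>auto simp: C_def\<close>)
  have inA: "fst (f x) = card a" if ha: "a \<in> A" "x \<in> a" for a x
  proof -
    obtain j where j: "j \<in> {1..m}" "a \<in> PA j" using ha(1) A_def by blast
    then have "card a = j" using PA by blast
    moreover have "a \<subseteq> R j" using PA j partition_onD1 by blast
    ultimately show ?thesis using ha(2) unfolding R_def by blast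
  qed
  have inB: "snd (f x) = card b" if hb: "b \<in> B" "x \<in> b" for b x
  proof -
    obtain j where j: "j \<in> {1..m}" "b \<in> PB j" using hb(1) B_def by blast
    then have "card b = j" using PB by blast
    moreover have "b \<subseteq> C j" using PB j partition_onD1 by blast
    ultimately show ?thesis using hb(2) unfolding C_def by blast
  qed
  have "KG_pair n A B"
    unfolding KG_pair_def
  proof (intro conjI pA pB allI impI)
    fix j k :: nat
    let ?T = "{x \<in> {1..n}. (\<exists>a\<in>A. x \<in> a \<and> card a = j) \<and> (\<exists>b\<in>B. x \<in> b \<and> card b = k)}"
    have sub: "?T \<subseteq> {x\<in>{1..n}. f x = (j, k)}"
    proof
      fix x assume "x \<in> ?T"
      then obtain a b where x: "x \<in> {1..n}" and a: "a \<in> A" "x \<in> a" "card a = j"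
        and b: "b \<in> B" "x \<in> b" "card b = k"
        by blast
      have "fst (f x) = j" using inA[OF a(1,2)] a(3) by simp
      moreover have "snd (f x) = k" using inB[OF b(1,2)] b(3) by simp
      ultimately have "f x = (j, k)" by (simp add: prod_eq_iff)
      then show "x \<in> {x\<in>{1..n}. f x = (j, k)}" using x by blast
    qed
    have "card {x\<in>{1..n}. f x = (j, k)} \<le> Suc 0"
    proof (subst card_le_Suc0_iff_eq)
      show "finite {x\<in>{1..n}. f x = (j, k)}" by simp
      show "\<forall>x1\<in>{x\<in>{1..n}. f x = (j, k)}. \<forall>x2\<in>{x\<in>{1..n}. f x = (j, k)}. x1 = x2"
      proof (intro ballI)
        fix x1 x2 assume h1: "x1 \<in> {x\<in>{1..n}. f x = (j, k)}" and h2: "x2 \<in> {x\<in>{1..n}. f x = (j, k)}"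
        then have "f x1 = f x2" "x1 \<in> {1..n}" "x2 \<in> {1..n}" by simp_all
        then show "x1 = x2" using inj_onD[OF inj] by blast
      qed
    qed
    then show "card ?T \<le> 1" using card_mono[OF _ sub] by simp
  qed
  then show ?thesis unfolding KG_exists_def by blast
qed

theorem lemma1:
  fixes n :: nat
  assumes "n \<ge> 1"
  shows "KG_exists n \<longleftrightarrow>
    (\<exists>m::nat. m > 0 \<and> (\<exists>M :: nat \<Rightarrow> nat \<Rightarrow> nat.
       (\<forall>i\<in>{1..m}. \<forall>l\<in>{1..m}. M i l \<in> {0, 1}) \<and>
       (\<forall>j\<in>{1..m}. j dvd (\<Sum>l=1..m. M j l) \<and> j dvd (\<Sum>i=1..m. M i j)) \<and>
       (\<Sum>j=1..m. \<Sum>l=1..m. M j l) = n \<and>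
       (\<Sum>j=1..m. \<Sum>i=1..m. M i j) = n))"
proof
  assume "KG_exists n"
  then obtain A B where "KG_pair n A B" unfolding KG_exists_def by blast
  then show "\<exists>m::nat. m > 0 \<and> (\<exists>M :: nat \<Rightarrow> nat \<Rightarrow> nat.
       (\<forall>i\<in>{1..m}. \<forall>l\<in>{1..m}. M i l \<in> {0, 1}) \<and>
       (\<forall>j\<in>{1..m}. j dvd (\<Sum>l=1..m. M j l) \<and> j dvd (\<Sum>i=1..m. M i j)) \<and>
       (\<Sum>j=1..m. \<Sum>l=1..m. M j l) = n \<and>
       (\<Sum>j=1..m. \<Sum>i=1..m. M i j) = n)"
    by (rule forward[OF assms])
next
  assume "\<exists>m::nat. m > 0 \<and> (\<exists>M :: nat \<Rightarrow> nat \<Rightarrow> nat.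
       (\<forall>i\<in>{1..m}. \<forall>l\<in>{1..m}. M i l \<in> {0, 1}) \<and>
       (\<forall>j\<in>{1..m}. j dvd (\<Sum>l=1..m. M j l) \<and> j dvd (\<Sum>i=1..m. M i j)) \<and>
       (\<Sum>j=1..m. \<Sum>l=1..m. M j l) = n \<and>
       (\<Sum>j=1..m. \<Sum>i=1..m. M i j) = n)"
  then obtain m M where "m > 0" "\<forall>i\<in>{1..m}. \<forall>l\<in>{1..m}. M i l \<in> {0, 1::nat}"
    "\<forall>j\<in>{1..m}. j dvd (\<Sum>l=1..m. M j l) \<and> j dvd (\<Sum>i=1..m. M i j)"
    "(\<Sum>j=1..m. \<Sum>l=1..m. M j l) = n" by blast
  then show "KG_exists n" by (rule backward)
qed

end
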